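(* For any positive integer $n$, $$\frac{3}{2}\sum_{k=1}^{n}\frac{1}{k}\binom{2k}{k}=\sum_{k=1}^{n}\frac{1}{k}\binom{n+k}{k}+H_n(1),$$ $$\sum_{k=1}^n\binom{2k}{k}\left(\frac{3H_k(1)}{2k}-\frac{1}{k^2}\right)=\sum_{k=1}^{n}\binom{n+k}{k}\frac{H_k(1)}{k}-H_n(2),$$ $$\sum_{k=1}^n\binom{2k}{k}\left(\frac{3H_k(2)}{k}-\frac{1}{2k^3}\right)=\sum_{k=1}^{n}\binom{n+k}{k}\frac{H_k(2)+H_n(2)}{k}+H_n(2)H_n(1)-H_n(1,2).$$
   Context: For positive integers $s$, $H_n(s)=\sum_{j=1}^n j^{-s}$, and $H_n(1,2)=\sum_{1\le i<j\le n}\frac{1}{i\,j^2}$. *)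

theory Defs
  imports Complex_Main
begin

definition harm :: "nat \<Rightarrow> nat \<Rightarrow> real" where
  "harm s n = (\<Sum>j=1..n. 1 / real j ^ s)"

definition harm12 :: "nat \<Rightarrow> real" where
  "harm12 n = (\<Sum>j=1..n. \<Sum>i=1..<j. 1 / (real i * real j ^ 2))"

end

theory Submission
  imports Defs
begin

definition BB :: "nat \<Rightarrow> nat \<Rightarrow> real" where "BB n k = real ((n + k) choose k)"

lemma G_nat: "Suc n * (Suc n + k choose k) = (Suc n + k) * (n + k choose k)"
  by (metis Suc_times_binomial Suc_times_binomial_add add.commute add_Suc)

lemma G: "(real n + 1) * BB (Suc n) k = (real n + 1 + real k) * BB n k"
proof -
  have "real (Suc n * (Suc n + k choose k)) = real ((Suc n + k) * (n + k choose k))"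
    using G_nat by metis
  thus ?thesis unfolding BB_def by (simp add: algebra_simps)
qed

lemma F1: "BB (Suc n) (Suc m) = BB n (Suc m) + BB (Suc n) m"
  unfolding BB_def by (simp add: add.commute)

lemma F2: "(real m + 1) * BB n (Suc m) = (real n + 1) * BB (Suc n) m"
proof -
  have "(real n + 1) * BB (Suc n) (Suc m) = (real n + 1 + real (Suc m)) * BB n (Suc m)"
    by (rule G)
  thus ?thesis using F1[of n m] by (simp add: algebra_simps)
qed

lemma BB0[simp]: "BB n 0 = 1" unfolding BB_def by simp

lemma harm_Suc: "harm s (Suc n) = harm s n + 1 / (real n + 1) ^ s"
  unfolding harm_def by (simp add: add.commute)

lemma harm_0[simp]: "harm s 0 = 0" unfolding harm_def by simp

lemma harm12_Suc: "harm12 (Suc n) = harm12 n + harm 1 n / (real n + 1)^2"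
proof -
  have "(\<Sum>i=1..<Suc n. 1 / (real i * real (Suc n) ^ 2)) = (\<Sum>i=1..n. 1 / real i) / (real n + 1)^2"
    by (simp add: sum_divide_distrib atLeastLessThanSuc_atLeastAtMost add.commute)
  thus ?thesis unfolding harm12_def harm_def by simp
qed

lemma harm12_0[simp]: "harm12 0 = 0" unfolding harm12_def by simp

lemma alg_pt: fixes x k c b :: real assumes "x > 0" "k > 0"
  shows "c * (x + k) / x * b / k = c * b / k + c * b / x"
  using assms by (simp add: field_simps)

lemma alg_PH1: fixes x y c H :: real assumes "x>0" "y>0"
  shows "c*y/x * H - (c*y/x - 1)/x + c*(H + 1/y) = (c + c*y/x)*(H + 1/y) - (c + c*y/x - 1)/x"
  using assms by (simp add: field_simps)

lemma alg_PH2: fixes x y c H Q :: real assumes "x>0" "y>0"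
  shows "c*y/x * H - Q/x + c*(H + 1/y^2) = (c + c*y/x)*(H + 1/y^2) - (Q + c/y)/x"
  using assms by (simp add: field_simps power2_eq_square)

definition TT :: "(nat \<Rightarrow> real) \<Rightarrow> nat \<Rightarrow> real" where
  "TT b n = (\<Sum>k=1..n. BB n k * b k / real k)"

lemma TT_Suc: "TT b (Suc n) = TT b n + BB n (Suc n) * b (Suc n) / (real n + 1)
   + (\<Sum>k=1..Suc n. BB n k * b k) / (real n + 1)"
proof -
  have pt: "BB (Suc n) k * b k / real k = BB n k * b k / real k + BB n k * b k / (real n + 1)"
    if "k \<ge> 1" for k
  proof -
    have "(real n + 1) * BB (Suc n) k = (real n + 1 + real k) * BB n k" by (rule G)
    hence e: "BB (Suc n) k = BB n k * (real n + 1 + real k) / (real n + 1)"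
      by (simp add: field_simps)
    show ?thesis using that alg_pt[of "real n + 1" "real k" "BB n k" "b k"] unfolding e
      by (simp add: add.commute)
  qed
  have "TT b (Suc n) = (\<Sum>k=1..Suc n. BB n k * b k / real k + BB n k * b k / (real n + 1))"
    unfolding TT_def by (rule sum.cong) (auto simp: pt)
  also have "\<dots> = (\<Sum>k=1..Suc n. BB n k * b k / real k) + (\<Sum>k=1..Suc n. BB n k * b k) / (real n + 1)"
    by (simp only: sum.distrib sum_divide_distrib)
  moreover have "(\<Sum>k=1..Suc n. BB n k * b k / real k) = TT b n + BB n (Suc n) * b (Suc n) / (real n + 1)"
    unfolding TT_def by (simp add: add.commute)
  ultimately show ?thesis by simp
qed

lemma P1: "(\<Sum>k=1..m. BB n k) = BB (Suc n) m - 1"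
proof (induction m)
  case 0 then show ?case by simp
next
  case (Suc m) then show ?case using F1[of n m] by simp
qed

lemma PH1: "(\<Sum>k=1..m. BB n k * harm 1 k) = BB (Suc n) m * harm 1 m - (BB (Suc n) m - 1) / (real n + 1)"
proof (induction m)
  case 0 then show ?case by simp
next
  case (Suc m)
  have f2: "(real m + 1) * BB n (Suc m) = (real n + 1) * BB (Suc n) m" by (rule F2)
  hence e: "BB (Suc n) m = BB n (Suc m) * (real m + 1) / (real n + 1)" by (simp add: field_simps)
  have "(\<Sum>k=1..Suc m. BB n k * harm 1 k) = (\<Sum>k=1..m. BB n k * harm 1 k) + BB n (Suc m) * harm 1 (Suc m)"
    by simp
  also have "\<dots> = BB (Suc n) (Suc m) * harm 1 (Suc m) - (BB (Suc n) (Suc m) - 1) / (real n + 1)"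
    unfolding Suc.IH F1[of n m] harm_Suc[of 1 m] e
    using alg_PH1[of "real n + 1" "real m + 1" "BB n (Suc m)" "harm 1 m"] by simp
  finally show ?case .
qed

lemma PH2: "(\<Sum>k=1..m. BB n k * harm 2 k) = BB (Suc n) m * harm 2 m - (\<Sum>k=1..m. BB n k / real k) / (real n + 1)"
proof (induction m)
  case 0 then show ?case by simp
next
  case (Suc m)
  have f2: "(real m + 1) * BB n (Suc m) = (real n + 1) * BB (Suc n) m" by (rule F2)
  hence e: "BB (Suc n) m = BB n (Suc m) * (real m + 1) / (real n + 1)" by (simp add: field_simps)
  have "(\<Sum>k=1..Suc m. BB n k * harm 2 k) = (\<Sum>k=1..m. BB n k * harm 2 k) + BB n (Suc m) * harm 2 (Suc m)"
    by simp
  also have "\<dots> = BB (Suc n) (Suc m) * harm 2 (Suc m) - (\<Sum>k=1..Suc m. BB n k / real k) / (real n + 1)"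
    unfolding Suc.IH F1[of n m] harm_Suc[of 2 m] e
    using alg_PH2[of "real n + 1" "real m + 1" "BB n (Suc m)" "harm 2 m" "\<Sum>k=1..m. BB n k / real k"] by simp
  finally show ?case .
qed

lemma BB_diag: "BB n (Suc n) = BB (Suc n) (Suc n) / 2"
proof -
  have "(real n + 1) * BB n (Suc n) = (real n + 1) * BB (Suc n) n" by (rule F2)
  hence "BB n (Suc n) = BB (Suc n) n" by simp
  thus ?thesis using F1[of n n] by simp
qed

definition L1 :: "nat \<Rightarrow> real" where "L1 n = (\<Sum>k=1..n. BB k k / real k)"
definition L2 :: "nat \<Rightarrow> real" where
  "L2 n = (\<Sum>k=1..n. BB k k * (3 * harm 1 k / (2 * real k) - 1 / real k ^ 2))"
definition L3 :: "nat \<Rightarrow> real" where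
  "L3 n = (\<Sum>k=1..n. BB k k * (3 * harm 2 k / real k - 1 / (2 * real k ^ 3)))"
definition Q :: "nat \<Rightarrow> nat \<Rightarrow> real" where "Q n m = (\<Sum>k=1..m. BB n k / real k)"

lemma L1_Suc: "L1 (Suc n) = L1 n + BB (Suc n) (Suc n) / (real n + 1)"
  unfolding L1_def by (simp add: add.commute)
lemma L2_Suc: "L2 (Suc n) = L2 n + BB (Suc n) (Suc n) * (3 * harm 1 (Suc n) / (2 * (real n + 1)) - 1 / (real n + 1) ^ 2)"
  unfolding L2_def by (simp add: add.commute)
lemma L3_Suc: "L3 (Suc n) = L3 n + BB (Suc n) (Suc n) * (3 * harm 2 (Suc n) / (real n + 1) - 1 / (2 * (real n + 1) ^ 3))"
  unfolding L3_def by (simp add: add.commute)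
lemma Q_Suc: "Q n (Suc m) = Q n m + BB n (Suc m) / (real m + 1)"
  unfolding Q_def by (simp add: add.commute)
lemma TT1: "TT (\<lambda>_. 1) n = Q n n" unfolding TT_def Q_def by simp

lemma harm1_Suc: "harm 1 (Suc n) = harm 1 n + 1 / (real n + 1)"
  using harm_Suc[of 1 n] by simp
lemma harm2_Suc: "harm 2 (Suc n) = harm 2 n + 1 / (real n + 1)^2"
  using harm_Suc[of 2 n] by simp

lemma alg1: fixes x L T h b :: real assumes "x > 0" "3/2 * L = T + h"
  shows "3/2 * (L + b/x) = T + b/2/x + (b - 1)/x + (h + 1/x)"
proof -
  have "T = 3/2 * L - h" using assms(2) by linarith
  then show ?thesis using assms(1) by (simp add: divide_simps) algebra
qed

lemma alg2: fixes x T h h2 b :: real assumes "x > 0"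
  shows "(T - h2) + b * (3 * (h + 1/x) / (2 * x) - 1 / x^2) = T + b/2 * (h + 1/x) / x + (b * (h + 1/x) - (b - 1)/x)/x - (h2 + 1/x^2)"
  using assms by (simp add: divide_simps) algebra

lemma alg3: fixes x L T h h2 b H12 :: real assumes "x > 0"
  shows "(T + 3/2 * h2 * L - H12) + b * (3 * (h2 + 1/x^2) / x - 1 / (2 * x^3)) = T + b/2 * (h2 + 1/x^2) / x
     + (b * (h2 + 1/x^2) - ((3/2 * L - h) + b/2/x)/x)/x + 3/2 * (h2 + 1/x^2) * (L + b/x) - (H12 + h/x^2)"
  using assms by (simp add: divide_simps) algebra

lemma claim1: "3/2 * L1 n = Q n n + harm 1 n"
proof (induction n)
  case 0 then show ?case by (simp add: L1_def Q_def)
next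
  case (Suc n)
  have pos: "real n + 1 > 0" by simp
  have e: "Q (Suc n) (Suc n) = Q n n + BB (Suc n) (Suc n) / 2 / (real n + 1) + (BB (Suc n) (Suc n) - 1) / (real n + 1)"
    using TT_Suc[of "\<lambda>_. 1" n] P1[of n "Suc n"] unfolding TT1 BB_diag by simp
  show ?case unfolding L1_Suc harm1_Suc e
    by (rule alg1[OF pos Suc.IH])
qed

lemma claim2: "L2 n = TT (harm 1) n - harm 2 n"
proof (induction n)
  case 0 then show ?case by (simp add: L2_def TT_def)
next
  case (Suc n)
  have pos: "real n + 1 > 0" by simp
  have e: "TT (harm 1) (Suc n) = TT (harm 1) n + BB (Suc n) (Suc n) / 2 * harm 1 (Suc n) / (real n + 1)
     + (BB (Suc n) (Suc n) * harm 1 (Suc n) - (BB (Suc n) (Suc n) - 1) / (real n + 1)) / (real n + 1)"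
    using TT_Suc[of "harm 1" n] PH1[of n "Suc n"] unfolding BB_diag by simp
  show ?case unfolding L2_Suc e Suc.IH harm1_Suc harm2_Suc
    by (rule alg2[OF pos])
qed

lemma claim3: "L3 n = TT (harm 2) n + 3/2 * harm 2 n * L1 n - harm12 n"
proof (induction n)
  case 0 then show ?case by (simp add: L3_def TT_def L1_def)
next
  case (Suc n)
  have pos: "real n + 1 > 0" by simp
  have q: "Q n (Suc n) = (3/2 * L1 n - harm 1 n) + BB (Suc n) (Suc n) / 2 / (real n + 1)"
    using claim1[of n] Q_Suc[of n n] BB_diag[of n] by (simp add: field_simps)
  have e: "TT (harm 2) (Suc n) = TT (harm 2) n + BB (Suc n) (Suc n) / 2 * harm 2 (Suc n) / (real n + 1)
     + (BB (Suc n) (Suc n) * harm 2 (Suc n) - ((3/2 * L1 n - harm 1 n) + BB (Suc n) (Suc n) / 2 / (real n + 1)) / (real n + 1)) / (real n + 1)"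
    using TT_Suc[of "harm 2" n] PH2[of n "Suc n"] q unfolding Q_def BB_diag by simp
  show ?case unfolding L3_Suc e Suc.IH harm2_Suc L1_Suc harm12_Suc
    by (rule alg3[OF pos])
qed

lemma BBkk: "real ((2*k) choose k) = BB k k" unfolding BB_def by (simp add: mult_2)

theorem mainTheorem3:
  fixes n :: nat
  assumes "n \<ge> 1"
  shows "(3/2 * (\<Sum>k=1..n. 1 / real k * real ((2*k) choose k))
           = (\<Sum>k=1..n. 1 / real k * real ((n+k) choose k)) + harm 1 n)
    \<and> ((\<Sum>k=1..n. real ((2*k) choose k) * (3 * harm 1 k / (2 * real k) - 1 / real k ^ 2))
           = (\<Sum>k=1..n. real ((n+k) choose k) * harm 1 k / real k) - harm 2 n)
    \<and> ((\<Sum>k=1..n. real ((2*k) choose k) * (3 * harm 2 k / real k - 1 / (2 * real k ^ 3)))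
           = (\<Sum>k=1..n. real ((n+k) choose k) * (harm 2 k + harm 2 n) / real k)
             + harm 2 n * harm 1 n - harm12 n)"
proof -
  have a1: "(\<Sum>k=1..n. 1 / real k * real ((2*k) choose k)) = L1 n"
    unfolding L1_def BBkk by simp
  have a2: "(\<Sum>k=1..n. 1 / real k * real ((n+k) choose k)) = Q n n"
    unfolding Q_def BB_def by simp
  have b1: "(\<Sum>k=1..n. real ((2*k) choose k) * (3 * harm 1 k / (2 * real k) - 1 / real k ^ 2)) = L2 n"
    unfolding L2_def BBkk by simp
  have b2: "(\<Sum>k=1..n. real ((n+k) choose k) * harm 1 k / real k) = TT (harm 1) n"
    unfolding TT_def BB_def by simp
  have c1: "(\<Sum>k=1..n. real ((2*k) choose k) * (3 * harm 2 k / real k - 1 / (2 * real k ^ 3))) = L3 n"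
    unfolding L3_def BBkk by simp
  have c2: "(\<Sum>k=1..n. real ((n+k) choose k) * (harm 2 k + harm 2 n) / real k)
      = TT (harm 2) n + harm 2 n * Q n n"
    unfolding TT_def Q_def BB_def
    by (simp add: sum.distrib sum_distrib_left add_divide_distrib distrib_left algebra_simps)
  have q: "Q n n = 3/2 * L1 n - harm 1 n" using claim1[of n] by linarith
  have l3: "L1 n * 3 = 2 * Q n n + 2 * harm 1 n" using claim1[of n] by linarith
  have r: "L1 n * (3 * harm 2 n) = 2 * (Q n n * harm 2 n) + 2 * (harm 1 n * harm 2 n)"
  proof -
    have "(L1 n * 3) * harm 2 n = (2 * Q n n + 2 * harm 1 n) * harm 2 n" using l3 by simp
    thus ?thesis by (simp add: algebra_simps)
  qed
  show ?thesis
    unfolding a1 a2 b1 b2 c1 c2 claim2 claim3 using claim1[of n] r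
    by (simp add: algebra_simps)
qed

end
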